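(* Consider a downlink system in which a base station with $N$ antennas and power budget $p>0$ serves $K$ single-antenna users through an $M$-element reconfigurable intelligent surface (RIS). For beamforming vectors $\{\mathbf{w}\}=\{\mathbf{w}_k\in\mathbb{C}^{N\times1}\}_{k=1}^K$ and an RIS matrix $\mathbf{\Phi}\in\mathbb{C}^{M\times M}$, the SINR of user $k$ is \[ \gamma_k=\frac{|\mathbf{h}_k(\mathbf{\Phi})\mathbf{w}_k|^2}{\sigma^2+\sum_{i\neq k}|\mathbf{h}_k(\mathbf{\Phi})\mathbf{w}_i|^2},\qquad \mathbf{h}_k(\mathbf{\Phi})=\mathbf{f}_k\mathbf{\Phi}\mathbf{F}, \] and its rate is $r_k=f(\gamma_k)$ with $f(\gamma)=\ln(1+\gamma)-c\sqrt{\frac{2\gamma}{1+\gamma}}$ and $c=Q^{-1}(\epsilon)/\sqrt{n}$. Let the set of feasible pairs $(\{\mathbf{w}\},\mathbf{\Phi})$ be those with $\sum_k\|\mathbf{w}_k\|^2\le p$ and $\mathbf{\Phi}\in\mathcal{E}$ (where $\mathcal{E}$ is any one of the RIS feasible sets described in the context), and assume that $\gamma_k\geq\bar{\gamma}=\frac12(\sqrt{1+2c^2}-1)$ for all $k=1,\dots,K$. Let the SINR region be the set of all achievable SINR vectors $(\gamma_1,\dots,\gamma_K)$ and the rate region be the set of all achievable rate vectors $(r_1,\dots,r_K)$ over feasible pairs. Then every point on the boundary of the rate region corresponds (via $r_k=f(\gamma_k)$ for each $k$) to a point on the boundary of the SINR region, and vice versa.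
   Context: $\mathbf{F}\in\mathbb{C}^{M\times N}$ is the base-station-to-RIS channel matrix, $\mathbf{f}_k\in\mathbb{C}^{1\times M}$ the RIS-to-user-$k$ channel, $\sigma^2>0$ the noise power, $n$ the block length and $\epsilon\in(0,1)$ the maximum tolerable decoding error probability; $Q^{-1}$ is the inverse Gaussian $Q$-function. The transmit signal is $\mathbf{x}=\sum_k\mathbf{w}_ks_k$ with i.i.d. $s_k\sim\mathcal{CN}(0,1)$, so $\mathbb{E}\{\mathbf{x}\mathbf{x}^H\}=\sum_k\mathbf{w}_k\mathbf{w}_k^H$. The RIS feasible set $\mathcal{E}$ is one of: (i) locally passive diagonal: $\mathbf{\Phi}$ diagonal with $|\phi_{mm}|=1$ for all $m$; (ii) globally passive diagonal: $\mathbf{\Phi}$ diagonal with $\mathrm{Tr}\big(\mathbf{F}\mathbb{E}\{\mathbf{x}\mathbf{x}^H\}\mathbf{F}^H(\mathbf{\Phi}^H\mathbf{\Phi}-\mathbf{I}_M)\big)\le 0$; (iii) globally passive beyond diagonal: $\mathbf{\Phi}=\mathbf{\Phi}^T$ with $\mathrm{Tr}\big(\mathbf{F}\mathbb{E}\{\mathbf{x}\mathbf{x}^H\}\mathbf{F}^H(\mathbf{\Phi}^H\mathbf{\Phi}-\mathbf{I}_M)\big)\le 0$. A point of a region in $\mathbb{R}^K$ is on its boundary if no other point of the region is componentwise at least as large with at least one component strictly larger. *)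

theory Defs
  imports "HOL-Analysis.Analysis"
begin

definition Qfun :: "real \<Rightarrow> real" where
  "Qfun x = integral {x..} (\<lambda>t. exp (- (t ^ 2) / 2)) / sqrt (2 * pi)"

definition Qinv :: "real \<Rightarrow> real" where
  "Qinv e = (THE x. Qfun x = e)"

definition cconst :: "real \<Rightarrow> nat \<Rightarrow> real" where
  "cconst e n = Qinv e / sqrt (real n)"

definition frate :: "real \<Rightarrow> real \<Rightarrow> real" where
  "frate c g = ln (1 + g) - c * sqrt (2 * g / (1 + g))"

definition gbar :: "real \<Rightarrow> real" where
  "gbar c = (sqrt (1 + 2 * c ^ 2) - 1) / 2"

definition ctrans :: "complex ^ 'b ^ 'a \<Rightarrow> complex ^ 'a ^ 'b" where
  "ctrans A = (\<chi> i j. cnj (A $ j $ i))"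

definition outer :: "complex ^ 'n \<Rightarrow> complex ^ 'n ^ 'n" where
  "outer w = (\<chi> i j. w $ i * cnj (w $ j))"

definition rowmul :: "complex ^ 'n \<Rightarrow> complex ^ 'n \<Rightarrow> complex" where
  "rowmul h w = (\<Sum>i\<in>UNIV. h $ i * w $ i)"

definition hch :: "complex ^ 'n ^ 'm \<Rightarrow> complex ^ 'm \<Rightarrow> complex ^ 'm ^ 'm \<Rightarrow> complex ^ 'n" where
  "hch F fk Phi = (fk v* Phi) v* F"

definition sinr ::
  "complex ^ 'n ^ 'm \<Rightarrow> ('k::finite \<Rightarrow> complex ^ 'm) \<Rightarrow> real \<Rightarrow>
   ('k \<Rightarrow> complex ^ 'n) \<Rightarrow> complex ^ 'm ^ 'm \<Rightarrow> 'k \<Rightarrow> real" where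
  "sinr F fs s2 W Phi k =
     (cmod (rowmul (hch F (fs k) Phi) (W k)))\<^sup>2 /
     (s2 + (\<Sum>i\<in>UNIV - {k}. (cmod (rowmul (hch F (fs k) Phi) (W i)))\<^sup>2))"

text \<open>Transmit covariance E{x x^H} = sum_k w_k w_k^H.\<close>
definition txcov :: "('k::finite \<Rightarrow> complex ^ 'n) \<Rightarrow> complex ^ 'n ^ 'n" where
  "txcov W = (\<Sum>k\<in>UNIV. outer (W k))"

datatype ris_model = LocallyPassiveDiag | GloballyPassiveDiag | GloballyPassiveBD

definition is_diag :: "complex ^ 'm ^ 'm \<Rightarrow> bool" where
  "is_diag Phi \<longleftrightarrow> (\<forall>i j. i \<noteq> j \<longrightarrow> Phi $ i $ j = 0)"

text \<open>Global passivity: Tr(F E{xx^H} F^H (Phi^H Phi - I)) \<le> 0. The trace is real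
  (product of a Hermitian PSD and a Hermitian matrix), so we compare its real part.\<close>
definition globally_passive ::
  "complex ^ 'n ^ 'm \<Rightarrow> ('k::finite \<Rightarrow> complex ^ 'n) \<Rightarrow> complex ^ 'm ^ 'm \<Rightarrow> bool" where
  "globally_passive F W Phi \<longleftrightarrow>
     Re (trace (F ** txcov W ** ctrans F ** (ctrans Phi ** Phi - mat 1))) \<le> 0"

definition ris_feasible ::
  "ris_model \<Rightarrow> complex ^ 'n ^ 'm \<Rightarrow> ('k::finite \<Rightarrow> complex ^ 'n) \<Rightarrow> complex ^ 'm ^ 'm \<Rightarrow> bool" where
  "ris_feasible md F W Phi = (case md of
       LocallyPassiveDiag \<Rightarrow> is_diag Phi \<and> (\<forall>i. cmod (Phi $ i $ i) = 1)
     | GloballyPassiveDiag \<Rightarrow> is_diag Phi \<and> globally_passive F W Phi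
     | GloballyPassiveBD \<Rightarrow> transpose Phi = Phi \<and> globally_passive F W Phi)"

text \<open>Feasible pairs, restricted to the operating regime gamma_k \<ge> gbar for all k.\<close>
definition feasible ::
  "ris_model \<Rightarrow> complex ^ 'n ^ 'm \<Rightarrow> ('k::finite \<Rightarrow> complex ^ 'm) \<Rightarrow> real \<Rightarrow> real \<Rightarrow> real \<Rightarrow>
   ('k \<Rightarrow> complex ^ 'n) \<Rightarrow> complex ^ 'm ^ 'm \<Rightarrow> bool" where
  "feasible md F fs s2 p c W Phi \<longleftrightarrow>
     (\<Sum>k\<in>UNIV. (norm (W k))\<^sup>2) \<le> p \<and> ris_feasible md F W Phi \<and>
     (\<forall>k. sinr F fs s2 W Phi k \<ge> gbar c)"

definition sinr_region ::
  "ris_model \<Rightarrow> complex ^ 'n ^ 'm \<Rightarrow> ('k::finite \<Rightarrow> complex ^ 'm) \<Rightarrow> real \<Rightarrow> real \<Rightarrow> real \<Rightarrow> (real ^ 'k) set" where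
  "sinr_region md F fs s2 p c =
     {(\<chi> k. sinr F fs s2 W Phi k) | W Phi. feasible md F fs s2 p c W Phi}"

definition rate_region ::
  "ris_model \<Rightarrow> complex ^ 'n ^ 'm \<Rightarrow> ('k::finite \<Rightarrow> complex ^ 'm) \<Rightarrow> real \<Rightarrow> real \<Rightarrow> real \<Rightarrow> (real ^ 'k) set" where
  "rate_region md F fs s2 p c =
     {(\<chi> k. frate c (sinr F fs s2 W Phi k)) | W Phi. feasible md F fs s2 p c W Phi}"

definition on_boundary :: "(real ^ 'k) set \<Rightarrow> real ^ 'k \<Rightarrow> bool" where
  "on_boundary S x \<longleftrightarrow> x \<in> S \<and>
     \<not> (\<exists>y\<in>S. (\<forall>k. x $ k \<le> y $ k) \<and> (\<exists>k. x $ k < y $ k))"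

end

theory Submission
  imports Defs
begin
lemma frate_deriv:
  assumes z: "0 < z"
  shows "DERIV (frate c) z :> (1/(1+z) - c / ((1+z)^2 * sqrt (2*z/(1+z))))"
proof -
  have q: "DERIV (\<lambda>g. 2*g/(1+g)) z :> 2/(1+z)^2"
    using z by (auto intro!: derivative_eq_intros simp: field_simps power2_eq_square)
  have pos: "0 < 2*z/(1+z)" using z by simp
  have s: "DERIV (\<lambda>g. sqrt (2*g/(1+g))) z :> inverse (sqrt (2*z/(1+z))) / 2 * (2/(1+z)^2)"
    by (rule DERIV_chain2[OF DERIV_real_sqrt[OF pos] q])
  have l: "DERIV (\<lambda>g. ln (1+g)) z :> 1/(1+z)"
    using z by (auto intro!: derivative_eq_intros)
  have "DERIV (frate c) z :> (1/(1+z) - c * (inverse (sqrt (2*z/(1+z))) / 2 * (2/(1+z)^2)))"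
    unfolding frate_def by (intro DERIV_diff l DERIV_cmult s)
  moreover have "c * (inverse (sqrt (2*z/(1+z))) / 2 * (2/(1+z)^2)) = c / ((1+z)^2 * sqrt (2*z/(1+z)))"
    by (simp add: field_simps)
  ultimately show ?thesis by simp
qed
lemma gbar_nonneg: "0 \<le> gbar c"
  unfolding gbar_def by simp

lemma frate_mono_nonpos:
  assumes "c \<le> 0" "0 \<le> x" "x < y"
  shows "frate c x < frate c y"
proof -
  have "ln (1 + x) < ln (1 + y)" using assms by simp
  moreover have "2 * x / (1 + x) \<le> 2 * y / (1 + y)"
    using assms by (simp add: field_simps)
  hence "sqrt (2 * x / (1 + x)) \<le> sqrt (2 * y / (1 + y))" by simp
  hence "- c * sqrt (2 * x / (1 + x)) \<le> - c * sqrt (2 * y / (1 + y))"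
    using assms(1) by (intro mult_left_mono) auto
  ultimately show ?thesis unfolding frate_def by linarith
qed
lemma frate_deriv_pos:
  assumes c: "0 < c" and z: "gbar c < z"
  shows "0 < 1/(1+z) - c / ((1+z)^2 * sqrt (2*z/(1+z)))"
proof -
  have z0: "0 < z" using z gbar_nonneg[of c] by linarith
  have "sqrt (1 + 2*c^2) < 2*z+1" using z unfolding gbar_def by simp
  hence "(sqrt (1 + 2*c^2))^2 < (2*z+1)^2"
    by (intro power_strict_mono) auto
  hence h: "c^2 < 2*z*(1+z)" by (simp add: algebra_simps power2_eq_square)
  have "sqrt (c^2) < sqrt (2*z*(1+z))" using h by (rule real_sqrt_less_mono)
  hence cs: "c < sqrt (2*z*(1+z))" using c by simp
  have "sqrt (2*z*(1+z)) = (1+z) * sqrt (2*z/(1+z))"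
  proof -
    have "2*z*(1+z) = (1+z)^2 * (2*z/(1+z))" using z0 by (simp add: field_simps power2_eq_square)
    hence "sqrt (2*z*(1+z)) = sqrt ((1+z)^2) * sqrt (2*z/(1+z))" by (metis real_sqrt_mult)
    thus ?thesis using z0 by simp
  qed
  with cs have cs2: "c < (1+z) * sqrt (2*z/(1+z))" by simp
  have sp: "0 < sqrt (2*z/(1+z))" using z0 by simp
  have "c / ((1+z)^2 * sqrt (2*z/(1+z))) < (1+z) * sqrt (2*z/(1+z)) / ((1+z)^2 * sqrt (2*z/(1+z)))"
    using cs2 sp z0 by (intro divide_strict_right_mono) auto
  also have "\<dots> = 1/(1+z)"
  proof -
    have "\<And>a b::real. a>0 \<Longrightarrow> b>0 \<Longrightarrow> a*b/(a^2*b) = 1/a" by (simp add: power2_eq_square)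
    thus ?thesis using sp z0 by simp
  qed
  finally show ?thesis by simp
qed

lemma frate_mono:
  assumes "gbar c \<le> x" "x < y"
  shows "frate c x < frate c y"
proof (cases "c \<le> 0")
  case True thus ?thesis using assms gbar_nonneg[of c] frate_mono_nonpos by force
next
  case False
  hence c: "0 < c" by simp
  have g0: "0 < gbar c" using c unfolding gbar_def by simp
  have D: "\<And>t. x \<le> t \<Longrightarrow> t \<le> y \<Longrightarrow> DERIV (frate c) t :> (1/(1+t) - c / ((1+t)^2 * sqrt (2*t/(1+t))))"
    using assms g0 by (auto intro!: frate_deriv)
  then obtain t where t: "x < t" "t < y"
    "frate c y - frate c x = (y - x) * (1/(1+t) - c / ((1+t)^2 * sqrt (2*t/(1+t))))"
    using MVT2[OF assms(2) D] by blast
  have "0 < 1/(1+t) - c / ((1+t)^2 * sqrt (2*t/(1+t)))"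
    using frate_deriv_pos[OF c] t assms by simp
  with t assms show ?thesis by (smt (verit) mult_pos_pos)
qed

lemma frate_le_iff: "gbar c \<le> x \<Longrightarrow> gbar c \<le> y \<Longrightarrow> frate c x \<le> frate c y \<longleftrightarrow> x \<le> y"
  by (metis frate_mono linorder_not_le order_less_imp_le order.trans nle_le)
lemma frate_less_iff: "gbar c \<le> x \<Longrightarrow> gbar c \<le> y \<Longrightarrow> frate c x < frate c y \<longleftrightarrow> x < y"
  by (metis frate_le_iff linorder_not_le)

lemma region_img:
  "rate_region md F fs s2 p c = (\<lambda>g. \<chi> k. frate c (g $ k)) ` sinr_region md F fs s2 p c"
  unfolding rate_region_def sinr_region_def by (auto simp: image_iff) (metis vec_lambda_beta)+

lemma region_ge: "g \<in> sinr_region md F fs s2 p c \<Longrightarrow> gbar c \<le> g $ k"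
  unfolding sinr_region_def feasible_def by auto

lemma main:
  fixes F :: "complex ^ 'n ^ 'm" and fs :: "'k::finite \<Rightarrow> complex ^ 'm"
  shows "(\<forall>r. on_boundary (rate_region md F fs s2 p c) r \<longrightarrow>
            (\<exists>g. on_boundary (sinr_region md F fs s2 p c) g \<and> r = (\<chi> k. frate c (g $ k))))
       \<and> (\<forall>g. on_boundary (sinr_region md F fs s2 p c) g \<longrightarrow>
            on_boundary (rate_region md F fs s2 p c) (\<chi> k. frate c (g $ k)))"
proof -
  define S where "S = sinr_region md F fs s2 p c"
  define \<phi> where "\<phi> = (\<lambda>g::real^'k. \<chi> k. frate c (g $ k))"
  have R: "rate_region md F fs s2 p c = \<phi> ` S" unfolding S_def \<phi>_def by (rule region_img)
  have ge: "\<And>g k. g \<in> S \<Longrightarrow> gbar c \<le> g $ k" unfolding S_def by (rule region_ge)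
  have le: "\<And>g h k. g \<in> S \<Longrightarrow> h \<in> S \<Longrightarrow> \<phi> g $ k \<le> \<phi> h $ k \<longleftrightarrow> g $ k \<le> h $ k"
    unfolding \<phi>_def using ge frate_le_iff by simp
  have lt: "\<And>g h k. g \<in> S \<Longrightarrow> h \<in> S \<Longrightarrow> \<phi> g $ k < \<phi> h $ k \<longleftrightarrow> g $ k < h $ k"
    unfolding \<phi>_def using ge frate_less_iff by simp
  have A: "on_boundary (\<phi> ` S) (\<phi> g) \<longleftrightarrow> on_boundary S g" if g: "g \<in> S" for g
    unfolding on_boundary_def using g le lt by (auto simp: image_iff)
  have "(\<forall>r. on_boundary (\<phi> ` S) r \<longrightarrow> (\<exists>g. on_boundary S g \<and> r = \<phi> g)) \<and>
        (\<forall>g. on_boundary S g \<longrightarrow> on_boundary (\<phi> ` S) (\<phi> g))"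
  proof (intro conjI allI impI)
    fix r assume r: "on_boundary (\<phi> ` S) r"
    then obtain g where g: "g \<in> S" "r = \<phi> g" unfolding on_boundary_def by auto
    thus "\<exists>g. on_boundary S g \<and> r = \<phi> g" using A r by auto
  next
    fix g assume "on_boundary S g"
    thus "on_boundary (\<phi> ` S) (\<phi> g)" using A on_boundary_def by blast
  qed
  thus ?thesis unfolding R unfolding S_def \<phi>_def .
qed
theorem lemma2:
  fixes F :: "complex ^ 'n ^ 'm"
    and fs :: "'k::finite \<Rightarrow> complex ^ 'm"
    and s2 p eps :: real and n :: nat and md :: ris_model
  assumes "s2 > 0" and "p > 0" and "0 < eps" and "eps < 1" and "n > 0"
  defines "c \<equiv> cconst eps n"
  shows "(\<forall>r. on_boundary (rate_region md F fs s2 p c) r \<longrightarrow>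
            (\<exists>g. on_boundary (sinr_region md F fs s2 p c) g \<and> r = (\<chi> k. frate c (g $ k))))
       \<and> (\<forall>g. on_boundary (sinr_region md F fs s2 p c) g \<longrightarrow>
            on_boundary (rate_region md F fs s2 p c) (\<chi> k. frate c (g $ k)))"
  by (rule main)

end
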